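(* If $\mathcal A\subseteq\binom{[n]}{k}$ is $t$-intersecting, then for every $1\le i<j\le n$, \[\zeta_{k-1}(\Delta_{ij}(\mathcal A))\ge\zeta_{k-1}(\mathcal A).\]
   Context: A family is $t$-intersecting if any two members share at least $t$ elements. For $\mathcal F\subseteq\binom{[n]}{k}$, $\zeta_{k-1}(\mathcal F)=|\{\{F,G\}:F,G\in\mathcal F,\ |F\cap G|=k-1\}|$. Shift operation: for $i,j\in[n]$ and $A\in\mathcal A$, $\delta_{ij}(A)=(A\setminus\{j\})\cup\{i\}$ if $j\in A$, $i\notin A$ and $(A\setminus\{j\})\cup\{i\}\notin\mathcal A$; otherwise $\delta_{ij}(A)=A$. Then $\Delta_{ij}(\mathcal A)=\{\delta_{ij}(A):A\in\mathcal A\}$. *)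

theory Defs
  imports Main
begin

definition t_intersecting :: "nat \<Rightarrow> nat set set \<Rightarrow> bool" where
  "t_intersecting t \<A> \<longleftrightarrow> (\<forall>F\<in>\<A>. \<forall>G\<in>\<A>. F \<noteq> G \<longrightarrow> t \<le> card (F \<inter> G))"

definition zeta :: "nat \<Rightarrow> nat set set \<Rightarrow> nat" where
  "zeta k \<F> = card {{F, G} | F G. F \<in> \<F> \<and> G \<in> \<F> \<and> F \<noteq> G \<and> card (F \<inter> G) = k - 1}"

definition shift_set :: "nat \<Rightarrow> nat \<Rightarrow> nat set set \<Rightarrow> nat set \<Rightarrow> nat set" where
  "shift_set i j \<A> A =
     (if j \<in> A \<and> i \<notin> A \<and> insert i (A - {j}) \<notin> \<A> then insert i (A - {j}) else A)"

definition shift :: "nat \<Rightarrow> nat \<Rightarrow> nat set set \<Rightarrow> nat set set" where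
  "shift i j \<A> = shift_set i j \<A> ` \<A>"

end

theory Submission
  imports Defs
begin

lemma card_both_shift:
  assumes "finite F" "finite G" "j \<in> F" "j \<in> G" "i \<notin> F" "i \<notin> G"
  shows "card (insert i (F - {j}) \<inter> insert i (G - {j})) = card (F \<inter> G)"
proof -
  have e: "insert i (F - {j}) \<inter> insert i (G - {j}) = insert i ((F \<inter> G) - {j})" by auto
  have f: "finite (F \<inter> G)" using assms by simp
  have "card (insert i ((F \<inter> G) - {j})) = card ((F \<inter> G) - {j}) + 1"
    using f assms by (simp add: card_insert_if)
  also have "\<dots> = card (F \<inter> G)" using f assms
    by (metis IntI Suc_eq_plus1 card_Suc_Diff1)
  finally show ?thesis using e by simp
qed

lemma card_one_shift:
  assumes "finite F" "finite G" "card F = k" "card G = k" "i \<noteq> j"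
    "j \<in> F" "i \<notin> F" "insert i (F - {j}) \<noteq> G"
    "j \<notin> G \<or> i \<in> G" "card (F \<inter> G) = k - 1"
  shows "card (insert i (F - {j}) \<inter> G) = k - 1"
proof (cases "j \<in> G")
  case True
  then have "i \<in> G" using assms by simp
  then have "insert i (F - {j}) \<inter> G = insert i ((F \<inter> G) - {j})" using True by auto
  moreover have "card (insert i ((F \<inter> G) - {j})) = card (F \<inter> G)"
  proof -
    have f: "finite (F \<inter> G)" using assms by simp
    have "card (insert i ((F \<inter> G) - {j})) = card ((F \<inter> G) - {j}) + 1"
      using f assms by (simp add: card_insert_if)
    also have "\<dots> = card (F \<inter> G)" using f assms True
      by (metis IntI Suc_eq_plus1 card_Suc_Diff1)
    finally show ?thesis .
  qed
  ultimately show ?thesis using assms by simp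
next
  case False
  show ?thesis
  proof (cases "i \<in> G")
    case False2: True
    have e: "insert i (F - {j}) \<inter> G = insert i (F \<inter> G)" using False False2 by auto
    have "card (insert i (F \<inter> G)) = card (F \<inter> G) + 1"
      using assms by (simp add: card_insert_if)
    hence c: "card (insert i (F - {j}) \<inter> G) = k"
    proof -
      have "card (F \<inter> G) < k"
      proof -
        have "F \<inter> G \<noteq> F" using assms False by auto
        hence "F \<inter> G \<subset> F" by auto
        thus ?thesis using assms psubset_card_mono by metis
      qed
      thus ?thesis using e assms \<open>card (insert i (F \<inter> G)) = card (F \<inter> G) + 1\<close> by simp
    qed
    have "insert i (F - {j}) \<inter> G \<subseteq> G" by auto
    hence "insert i (F - {j}) \<inter> G = G" using c assms card_subset_eq by metis
    hence "G \<subseteq> insert i (F - {j})" by auto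
    moreover have "card (insert i (F - {j})) = k" using assms
      by (simp add: card_insert_if) (metis One_nat_def Suc_pred card_Diff_singleton card_gt_0_iff empty_iff)
    ultimately have "G = insert i (F - {j})" using assms
      by (metis card_subset_eq finite_Diff finite_insert)
    thus ?thesis using assms by simp
  next
    case False2: False
    have "insert i (F - {j}) \<inter> G = F \<inter> G" using False False2 by auto
    thus ?thesis using assms by simp
  qed
qed

theorem lemma2p2:
  fixes n k t i j :: nat and \<A> :: "nat set set"
  assumes "\<forall>A\<in>\<A>. A \<subseteq> {1..n} \<and> card A = k"
    and "t_intersecting t \<A>"
    and "1 \<le> i" and "i < j" and "j \<le> n"
  shows "zeta k (shift i j \<A>) \<ge> zeta k \<A>"
proof -
  let ?S = "shift i j \<A>"
  define \<sigma> where "\<sigma> X = insert i (X - {j})" for X :: "nat set"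
  define sh where "sh = shift_set i j \<A>"
  have ij: "i \<noteq> j" using assms by simp
  have finA: "finite \<A>"
  proof -
    have "\<A> \<subseteq> Pow {1..n}" using assms(1) by auto
    thus ?thesis by (meson finite_Pow_iff finite_atLeastAtMost finite_subset)
  qed
  have fin: "finite X \<and> card X = k" if "X \<in> \<A>" for X
    using assms(1) that finite_subset by (meson finite_atLeastAtMost)
  have shD: "sh X = (if j \<in> X \<and> i \<notin> X \<and> \<sigma> X \<notin> \<A> then \<sigma> X else X)" for X
    by (simp add: sh_def shift_set_def \<sigma>_def)
  have shS: "sh X \<in> ?S" if "X \<in> \<A>" for X using that by (simp add: shift_def sh_def)
  have \<sigma>inj: "X = Y" if "j \<in> X" "i \<notin> X" "j \<in> Y" "i \<notin> Y" "\<sigma> X = \<sigma> Y" for X Y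
  proof -
    have "X = insert j (\<sigma> X - {i})" using that ij by (auto simp: \<sigma>_def)
    moreover have "Y = insert j (\<sigma> Y - {i})" using that ij by (auto simp: \<sigma>_def)
    ultimately show ?thesis using that by simp
  qed
  have inj: "inj_on sh \<A>"
  proof (rule inj_onI)
    fix X Y assume XY: "X \<in> \<A>" "Y \<in> \<A>" "sh X = sh Y"
    show "X = Y"
      using XY \<sigma>inj[of X Y] shD[of X] shD[of Y] by (auto split: if_splits)
  qed
  define E where "E X = {{F, G} | F G. F \<in> X \<and> G \<in> X \<and> F \<noteq> G \<and> card (F \<inter> G) = k - 1}" for X :: "nat set set"
  have zeta: "zeta k X = card (E X)" for X by (simp add: zeta_def E_def)
  have Eex: "\<exists>F G. X = {F, G} \<and> F \<in> \<A> \<and> G \<in> \<A> \<and> F \<noteq> G \<and> card (F \<inter> G) = k - 1"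
    if "X \<in> E \<A>" for X using that unfolding E_def by (simp only: mem_Collect_eq)
  have Esub: "X \<subseteq> \<A>" if "X \<in> E \<A>" for X
    using Eex[OF that] by (elim exE conjE) simp
  have Ecard: "card (X \<inter> Y) = k - 1" if XYE: "{X, Y} \<in> E \<A>" for X Y
  proof -
    obtain F G where FG: "{X, Y} = {F, G}" "card (F \<inter> G) = k - 1"
      using Eex[OF XYE] by (elim exE conjE) simp
    then have "X \<inter> Y = F \<inter> G" unfolding doubleton_eq_iff by (metis Int_commute)
    then show ?thesis using FG(2) by simp
  qed
  define bad where "bad F G \<longleftrightarrow> F \<in> \<A> \<and> G \<in> \<A> \<and> j \<in> F \<and> i \<notin> F \<and> \<sigma> F \<notin> \<A> \<and> j \<in> G \<and> i \<notin> G \<and> \<sigma> G \<in> \<A>" for F G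
  define h where "h P = (if \<exists>F G. P = {F, G} \<and> bad F G then \<sigma> ` P else sh ` P)" for P
  have finE: "finite (E ?S)"
  proof -
    have "E ?S \<subseteq> Pow ?S" by (auto simp: E_def)
    moreover have "finite ?S" using finA by (simp add: shift_def)
    ultimately show ?thesis by (meson finite_Pow_iff finite_subset)
  qed
  have badE: "{\<sigma> F, \<sigma> G} \<in> E ?S" if b: "bad F G" and c: "card (F \<inter> G) = k - 1" for F G
  proof -
    have "\<sigma> F \<in> ?S" using shS[of F] shD[of F] b by (auto simp: bad_def)
    moreover have "\<sigma> G \<in> ?S" using shS[of "\<sigma> G"] shD[of "\<sigma> G"] b by (auto simp: bad_def \<sigma>_def)
    moreover have "\<sigma> F \<noteq> \<sigma> G" using b by (auto simp: bad_def)
    moreover have "card (\<sigma> F \<inter> \<sigma> G) = k - 1"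
      using card_both_shift[of F G j i] b c fin by (auto simp: bad_def \<sigma>_def)
    ultimately show ?thesis unfolding E_def by blast
  qed
  have hE: "h P \<in> E ?S" if "P \<in> E \<A>" for P
  proof -
    have "\<exists>F G. P = {F, G} \<and> F \<in> \<A> \<and> G \<in> \<A> \<and> F \<noteq> G \<and> card (F \<inter> G) = k - 1"
      using that unfolding E_def by (simp only: mem_Collect_eq)
    then obtain F G where P: "P = {F, G}" "F \<in> \<A>" "G \<in> \<A>" "F \<noteq> G" "card (F \<inter> G) = k - 1"
      by (elim exE conjE) simp
    show ?thesis
    proof (cases "\<exists>F G. P = {F, G} \<and> bad F G")
      case True
      then obtain F' G' where FG: "P = {F', G'}" "bad F' G'" by blast
      have "{F', G'} = {F, G}" using FG(1) P(1) by simp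
      then have "F' \<inter> G' = F \<inter> G" unfolding doubleton_eq_iff by (metis Int_commute)
      then have "card (F' \<inter> G') = k - 1" using P(5) by simp
      then show ?thesis using badE FG True by (simp add: h_def)
    next
      case False
      have PGF: "P = {G, F}" using P(1) by (simp add: insert_commute)
      have nb: "\<not> bad F G" "\<not> bad G F" using False P(1) PGF by blast+
      have hP: "h P = {sh F, sh G}" unfolding h_def using False P(1) by (simp only: if_False image_insert image_empty)
      have ne: "sh F \<noteq> sh G" using inj P by (meson inj_on_contraD)
      have fF: "finite F" "card F = k" "finite G" "card G = k" using fin P by auto
      have c: "card (sh F \<inter> sh G) = k - 1"
      proof (cases "j \<in> F \<and> i \<notin> F \<and> \<sigma> F \<notin> \<A>")
        case sF: True
        show ?thesis
        proof (cases "j \<in> G \<and> i \<notin> G \<and> \<sigma> G \<notin> \<A>")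
          case True
          then show ?thesis using sF shD[of F] shD[of G] card_both_shift[of F G j i] fF P
            by (simp add: \<sigma>_def)
        next
          case False
          have "sh F = \<sigma> F" using sF shD[of F] by simp
          moreover have "sh G = G" using False shD[of G] by auto
          moreover have "card (\<sigma> F \<inter> G) = k - 1"
          proof -
            have a1: "\<sigma> F \<noteq> G" using sF P(3) by blast
            have a2: "j \<notin> G \<or> i \<in> G" using nb(1) False P(2,3) sF unfolding bad_def by blast
            show ?thesis unfolding \<sigma>_def
              by (rule card_one_shift[of F G k i j]) (use fF ij sF P(5) a1 a2 in \<open>simp_all add: \<sigma>_def\<close>)
          qed
          ultimately show ?thesis by simp
        qed
      next
        case nF: False
        show ?thesis
        proof (cases "j \<in> G \<and> i \<notin> G \<and> \<sigma> G \<notin> \<A>")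
          case sG: True
          have "sh G = \<sigma> G" using sG shD[of G] by simp
          moreover have "sh F = F" using nF shD[of F] by auto
          moreover have "card (\<sigma> G \<inter> F) = k - 1"
          proof -
            have a1: "\<sigma> G \<noteq> F" using sG P(2) by blast
            have a2: "j \<notin> F \<or> i \<in> F" using nb(2) nF P(2,3) sG unfolding bad_def by blast
            have a3: "card (G \<inter> F) = k - 1" using P(5) by (simp add: Int_commute)
            show ?thesis unfolding \<sigma>_def
              by (rule card_one_shift[of G F k i j]) (use fF ij sG a3 a1 a2 in \<open>simp_all add: \<sigma>_def\<close>)
          qed
          ultimately show ?thesis by (simp add: Int_commute)
        next
          case False
          have "sh F = F" using nF shD[of F] by auto
          moreover have "sh G = G" using False shD[of G] by auto
          ultimately show ?thesis using P(5) by simp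
        qed
      qed
      have "sh F \<in> ?S" "sh G \<in> ?S" using shS P by auto
      then have "{sh F, sh G} \<in> E ?S" using ne c unfolding E_def by blast
      then show ?thesis using hP by simp
    qed
  qed
  have hinj: "inj_on h (E \<A>)"
  proof (rule inj_onI)
    fix P Q assume PQ: "P \<in> E \<A>" "Q \<in> E \<A>" "h P = h Q"
    have "\<exists>F G. P = {F, G} \<and> F \<in> \<A> \<and> G \<in> \<A> \<and> F \<noteq> G \<and> card (F \<inter> G) = k - 1"
      using PQ(1) unfolding E_def by (simp only: mem_Collect_eq)
    then obtain F G where P: "P = {F, G}" "F \<in> \<A>" "G \<in> \<A>" "F \<noteq> G" "card (F \<inter> G) = k - 1"
      by (elim exE conjE) simp
    have "\<exists>F2 G2. Q = {F2, G2} \<and> F2 \<in> \<A> \<and> G2 \<in> \<A> \<and> F2 \<noteq> G2 \<and> card (F2 \<inter> G2) = k - 1"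
      using PQ(2) unfolding E_def by (simp only: mem_Collect_eq)
    then obtain F2 G2 where Q: "Q = {F2, G2}" "F2 \<in> \<A>" "G2 \<in> \<A>" "F2 \<noteq> G2" "card (F2 \<inter> G2) = k - 1"
      by (elim exE conjE) simp
    have PA: "P \<subseteq> \<A>" "Q \<subseteq> \<A>" using P Q by auto
    have cross: False if b: "bad A B" "P' = {A, B}" "P' \<in> E \<A>" "Q' \<in> E \<A>"
        "\<not> (\<exists>F G. Q' = {F, G} \<and> bad F G)" "\<sigma> ` P' = sh ` Q'" for A B P' Q'
    proof -
      have shA: "sh A = \<sigma> A" using b(1) shD[of A] by (simp add: bad_def)
      have shB: "sh (\<sigma> B) = \<sigma> B" using shD[of "\<sigma> B"] by (simp add: \<sigma>_def)
      have "\<sigma> ` P' = sh ` {A, \<sigma> B}" using b(2) shA shB by simp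
      hence eq: "sh ` {A, \<sigma> B} = sh ` Q'" using b(6) by simp
      have s1: "Q' \<subseteq> \<A>" using Esub b(4) by blast
      have s2: "{A, \<sigma> B} \<subseteq> \<A>" using b(1) by (simp add: bad_def)
      have "{A, \<sigma> B} = Q'" using inj_on_image_eq_iff[OF inj s2 s1] eq by simp
      hence "Q' = {A, \<sigma> B}" by simp
      hence "card (A \<inter> \<sigma> B) = k - 1" using b(4) Ecard by simp
      moreover have "A \<inter> \<sigma> B = (A \<inter> B) - {j}" using b(1) by (auto simp: bad_def \<sigma>_def)
      moreover have "card (A \<inter> B) = k - 1" using b(2,3) Ecard by simp
      moreover have "j \<in> A \<inter> B" "finite (A \<inter> B)" using b(1) fin by (auto simp: bad_def)
      ultimately show False using card_Diff1_less[of "A \<inter> B" j] by simp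
    qed
    show "P = Q"
    proof (cases "\<exists>F G. P = {F, G} \<and> bad F G")
      case bP: True
      then obtain A B where AB: "P = {A, B}" "bad A B" by blast
      show ?thesis
      proof (cases "\<exists>F G. Q = {F, G} \<and> bad F G")
        case True
        then obtain C D where CD: "Q = {C, D}" "bad C D" by blast
        have "h P = \<sigma> ` P" "h Q = \<sigma> ` Q" unfolding h_def using bP True by (simp_all only: if_True)
        hence "\<sigma> ` P = \<sigma> ` Q" using PQ(3) by simp
        moreover have "inj_on \<sigma> (P \<union> Q)"
        proof (rule inj_onI)
          fix X Y assume XY: "X \<in> P \<union> Q" "Y \<in> P \<union> Q" "\<sigma> X = \<sigma> Y"
          have all: "j \<in> Z \<and> i \<notin> Z" if "Z \<in> P \<union> Q" for Z
            using that AB CD unfolding bad_def by auto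
          show "X = Y" using \<sigma>inj[of X Y] all[OF XY(1)] all[OF XY(2)] XY(3) by blast
        qed
        ultimately show ?thesis using inj_on_Un_image_eq_iff[of \<sigma> P Q] by simp
      next
        case False
        have "h P = \<sigma> ` P" "h Q = sh ` Q" unfolding h_def using bP False by (simp_all only: if_True if_False)
        hence "\<sigma> ` P = sh ` Q" using PQ(3) by simp
        then show ?thesis using cross[OF AB(2) AB(1) PQ(1) PQ(2) False] by simp
      qed
    next
      case nP: False
      show ?thesis
      proof (cases "\<exists>F G. Q = {F, G} \<and> bad F G")
        case True
        then obtain C D where CD: "Q = {C, D}" "bad C D" by blast
        have "h Q = \<sigma> ` Q" "h P = sh ` P" unfolding h_def using nP True by (simp_all only: if_True if_False)
        hence "\<sigma> ` Q = sh ` P" using PQ(3) by simp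
        then show ?thesis using cross[OF CD(2) CD(1) PQ(2) PQ(1) nP] by simp
      next
        case False
        have "h P = sh ` P" "h Q = sh ` Q" unfolding h_def using nP False by (simp_all only: if_False)
        hence "sh ` P = sh ` Q" using PQ(3) by simp
        then show ?thesis using inj_on_image_eq_iff[OF inj PA] by simp
      qed
    qed
  qed
  have "h ` E \<A> \<subseteq> E ?S" using hE by auto
  then show ?thesis using card_inj_on_le[OF hinj _ finE] zeta by simp
qed

end
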